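(* Let $(X,\mathcal{S})$ be a finite set system with $|X|=n=2^k$ for an integer $k\ge1$, and let the packings $\mathcal{F}_j$, the chains $F_j(S)$, the classes $\mathcal{S}_i$ and the families $\mathcal{F}_j^i$ be as defined in the context. Then there is an absolute constant $c>0$ such that for every $1\le i\le k$, every $j$ with $i-1\le j\le k$, and every $F\in\mathcal{F}_j^i$, $$|F|\le c\,\frac{n}{2^{i-1}} .$$
   Context: $\triangle$ denotes symmetric difference. Construction: set $\mathcal{F}_0=\{\emptyset\}$, and for $j=1,\dots,k$ let $\mathcal{F}_j\subseteq\mathcal{S}$ be a family that is maximal under inclusion subject to $|F\triangle F'|>n/2^j$ for all distinct $F,F'\in\mathcal{F}_j$. For $S\in\mathcal{S}$ define the nearest-neighbor chain $F_k(S):=S$ and, for $j=k,k-1,\dots,1$, let $F_{j-1}(S)$ be an element of $\mathcal{F}_{j-1}$ minimizing $|F_j(S)\triangle F|$ over $F\in\mathcal{F}_{j-1}$. For $i=1,\dots,k$ let $\mathcal{S}_i=\{S\in\mathcal{S}: n/2^i\le|S|<n/2^{i-1}\}$, and for $j=i-1,\dots,k$ let $\mathcal{F}_j^i=\{F_j(S):S\in\mathcal{S}_i\}$. *)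

theory Defs
  imports Complex_Main
begin

definition symdiff :: "'a set \<Rightarrow> 'a set \<Rightarrow> 'a set" where
  "symdiff A B = (A - B) \<union> (B - A)"

definition separated :: "real \<Rightarrow> 'a set set \<Rightarrow> bool" where
  "separated d G \<longleftrightarrow> (\<forall>A\<in>G. \<forall>B\<in>G. A \<noteq> B \<longrightarrow> real (card (symdiff A B)) > d)"

definition maximal_packing :: "'a set set \<Rightarrow> real \<Rightarrow> 'a set set \<Rightarrow> bool" where
  "maximal_packing S d F \<longleftrightarrow> F \<subseteq> S \<and> separated d F \<and>
     (\<forall>G. F \<subseteq> G \<and> G \<subseteq> S \<and> separated d G \<longrightarrow> G = F)"

definition valid_construction ::
  "'a set \<Rightarrow> 'a set set \<Rightarrow> nat \<Rightarrow> (nat \<Rightarrow> 'a set set) \<Rightarrow> ('a set \<Rightarrow> nat \<Rightarrow> 'a set) \<Rightarrow> bool" where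
  "valid_construction X S k Fam chain \<longleftrightarrow>
     Fam 0 = {{}} \<and>
     (\<forall>j\<in>{1..k}. maximal_packing S (real (card X) / 2 ^ j) (Fam j)) \<and>
     (\<forall>T\<in>S. chain T k = T \<and>
        (\<forall>j\<in>{1..k}. chain T (j - 1) \<in> Fam (j - 1) \<and>
           (\<forall>F\<in>Fam (j - 1). card (symdiff (chain T j) (chain T (j - 1)))
                                \<le> card (symdiff (chain T j) F))))"

definition size_class :: "'a set \<Rightarrow> 'a set set \<Rightarrow> nat \<Rightarrow> 'a set set" where
  "size_class X S i = {T\<in>S. real (card X) / 2 ^ i \<le> real (card T) \<and>
                             real (card T) < real (card X) / 2 ^ (i - 1)}"

definition chain_family ::
  "'a set \<Rightarrow> 'a set set \<Rightarrow> ('a set \<Rightarrow> nat \<Rightarrow> 'a set) \<Rightarrow> nat \<Rightarrow> nat \<Rightarrow> 'a set set" where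
  "chain_family X S chain i j = (\<lambda>T. chain T j) ` size_class X S i"

end

theory Submission
  imports Defs
begin

lemma step_bound:
  assumes fin: "finite X" and SX: "S \<subseteq> Pow X" and vc: "valid_construction X S k Fam chain"
    and T: "T \<in> S" and j: "j \<in> {1..k}"
  shows "real (card (chain T (j-1))) \<le> real (card (chain T j)) + real (card X) / 2^(j-1)"
proof -
  have F0: "Fam 0 = {{}}" using vc unfolding valid_construction_def by blast
  have pack: "\<And>l. l \<in> {1..k} \<Longrightarrow> maximal_packing S (real (card X) / 2 ^ l) (Fam l)"
    using vc unfolding valid_construction_def by blast
  have ck: "chain T k = T" using vc T unfolding valid_construction_def by blast
  have ch: "\<And>l. l \<in> {1..k} \<Longrightarrow> chain T (l - 1) \<in> Fam (l - 1) \<and>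
           (\<forall>F\<in>Fam (l - 1). card (symdiff (chain T l) (chain T (l - 1)))
                                \<le> card (symdiff (chain T l) F))"
    using vc T unfolding valid_construction_def by blast
  define A where "A = chain T j"
  define B where "B = chain T (j-1)"
  have AS: "A \<in> S"
  proof (cases "j = k")
    case True then show ?thesis using ck T A_def by simp
  next
    case False
    then have "Suc j \<in> {1..k}" using j by auto
    from ch[OF this] have "chain T j \<in> Fam j" by simp
    moreover have "Fam j \<subseteq> S" using pack[OF j] unfolding maximal_packing_def by blast
    ultimately show ?thesis using A_def by blast
  qed
  have AX: "A \<subseteq> X" using AS SX by blast
  have Bm: "B \<in> Fam (j-1)" and Bmin: "\<forall>F\<in>Fam (j - 1). card (symdiff A B) \<le> card (symdiff A F)"
    using ch[OF j] A_def B_def by auto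
  have BX: "B \<subseteq> X"
  proof (cases "j - 1 = 0")
    case True then show ?thesis using Bm F0 by simp
  next
    case False
    then have "j - 1 \<in> {1..k}" using j by auto
    then have "Fam (j-1) \<subseteq> S" using pack unfolding maximal_packing_def by blast
    then show ?thesis using Bm SX by blast
  qed
  have ex: "\<exists>F\<in>Fam (j-1). real (card (symdiff A F)) \<le> real (card X) / 2^(j-1)"
  proof (cases "j - 1 = 0")
    case True
    have "symdiff A {} = A" unfolding symdiff_def by auto
    moreover have "card A \<le> card X" using AX fin card_mono by blast
    ultimately show ?thesis using True F0 by simp
  next
    case False
    then have jj: "j - 1 \<in> {1..k}" using j by auto
    have mp: "maximal_packing S (real (card X) / 2 ^ (j-1)) (Fam (j-1))" using pack[OF jj] .
    show ?thesis
    proof (cases "A \<in> Fam (j-1)")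
      case True
      have "symdiff A A = {}" unfolding symdiff_def by auto
      then show ?thesis using True by (intro bexI[of _ A]) auto
    next
      case False
      let ?G = "insert A (Fam (j-1))"
      have "?G \<noteq> Fam (j-1)" using False by blast
      moreover have "Fam (j-1) \<subseteq> ?G" "?G \<subseteq> S" using mp AS unfolding maximal_packing_def by auto
      ultimately have ns: "\<not> separated (real (card X) / 2 ^ (j-1)) ?G"
        using mp unfolding maximal_packing_def by blast
      have sepF: "separated (real (card X) / 2 ^ (j-1)) (Fam (j-1))"
        using mp unfolding maximal_packing_def by blast
      have sym: "\<And>P Q. symdiff P Q = symdiff Q P" unfolding symdiff_def by auto
      from ns obtain P Q where PQ: "P \<in> ?G" "Q \<in> ?G" "P \<noteq> Q"
        "\<not> real (card (symdiff P Q)) > real (card X) / 2 ^ (j-1)"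
        unfolding separated_def by blast
      show ?thesis
      proof (cases "P = A")
        case True
        then have "Q \<in> Fam (j-1)" using PQ by auto
        then show ?thesis using PQ True by (intro bexI[of _ Q]) auto
      next
        case PA: False
        then have P: "P \<in> Fam (j-1)" using PQ by auto
        show ?thesis
        proof (cases "Q = A")
          case True
          have "symdiff A P = symdiff P A" by (rule sym)
          then show ?thesis using PQ P True by (intro bexI[of _ P]) auto
        next
          case False
          then have "Q \<in> Fam (j-1)" using PQ by auto
          then show ?thesis using sepF P PQ unfolding separated_def by force
        qed
      qed
    qed
  qed
  then obtain F where "F \<in> Fam (j-1)" "real (card (symdiff A F)) \<le> real (card X) / 2^(j-1)" by blast
  then have d: "real (card (symdiff A B)) \<le> real (card X) / 2^(j-1)" using Bmin by force
  have "B \<subseteq> A \<union> symdiff A B" unfolding symdiff_def by auto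
  moreover have "finite (A \<union> symdiff A B)" using AX BX fin unfolding symdiff_def
    by (meson finite_Diff finite_UnI finite_subset)
  ultimately have "card B \<le> card (A \<union> symdiff A B)" by (rule card_mono[rotated])
  also have "\<dots> \<le> card A + card (symdiff A B)" by (rule card_Un_le)
  finally have "real (card B) \<le> real (card A) + real (card (symdiff A B))" by linarith
  then show ?thesis using d unfolding A_def B_def by linarith
qed

lemma chain_bound:
  assumes fin: "finite X" and SX: "S \<subseteq> Pow X" and vc: "valid_construction X S k Fam chain"
    and T: "T \<in> S" and j: "j \<le> k"
  shows "real (card (chain T j)) \<le> real (card T) + 2 * real (card X) / 2^j"
  using j
proof (induction j rule: inc_induct)
  case base
  have "chain T k = T" using vc T unfolding valid_construction_def by blast
  then show ?case by simp
next
  case (step m)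
  have "Suc m \<in> {1..k}" using step by auto
  from step_bound[OF fin SX vc T this]
  have "real (card (chain T m)) \<le> real (card (chain T (Suc m))) + real (card X) / 2^m" by simp
  also have "\<dots> \<le> real (card T) + 2 * real (card X) / 2^(Suc m) + real (card X) / 2^m"
    using step.IH by simp
  also have "\<dots> = real (card T) + 2 * real (card X) / 2^m" by simp
  finally show ?case .
qed

theorem mainTheorem6:
  shows "\<exists>c::real. c > 0 \<and>
    (\<forall>(X::'a set) S k Fam chain.
       finite X \<and> S \<subseteq> Pow X \<and> k \<ge> 1 \<and> card X = 2 ^ k \<and>
       valid_construction X S k Fam chain \<longrightarrow>
       (\<forall>i\<in>{1..k}. \<forall>j\<in>{i - 1..k}. \<forall>F\<in>chain_family X S chain i j.
          real (card F) \<le> c * real (card X) / 2 ^ (i - 1)))"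
proof (intro exI[of _ 3] conjI allI impI ballI)
  show "(0::real) < 3" by simp
  fix X :: "'a set" and S k Fam chain i j F
  assume H: "finite X \<and> S \<subseteq> Pow X \<and> 1 \<le> k \<and> card X = 2 ^ k \<and> valid_construction X S k Fam chain"
    and i: "i \<in> {1..k}" and j: "j \<in> {i - 1..k}" and F: "F \<in> chain_family X S chain i j"
  from F obtain T where T: "T \<in> size_class X S i" and FT: "F = chain T j"
    unfolding chain_family_def by blast
  have TS: "T \<in> S" and Tc: "real (card T) < real (card X) / 2 ^ (i - 1)"
    using T unfolding size_class_def by auto
  have cb: "real (card F) \<le> real (card T) + 2 * real (card X) / 2^j"
    using chain_bound[of X S k Fam chain T j] H TS j FT by auto
  have "(2::real)^(i-1) \<le> 2^j" using j by (intro power_increasing) auto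
  then have "real (card X) / 2^j \<le> real (card X) / 2^(i-1)"
    by (intro divide_left_mono) auto
  then show "real (card F) \<le> 3 * real (card X) / 2 ^ (i - 1)" using cb Tc by simp
qed

end
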